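(* Let $X$ be a set. For every directed pseudo-metric $d$ on $\mathcal P(X)$, $\alpha_T(\gamma_T(d))$ is the greatest directed pseudo-metric $d'$ on $\mathcal P(X)$ such that $d'\le d$ and $d'$ is join-preserving in its first argument.
   Context: $r\oplus s=\min\{r+s,1\}$, $r\ominus s=\max\{0,r-s\}$. A directed pseudo-metric on $Y$ is $d\colon Y\times Y\to[0,1]$ with $d(y,y)=0$ and $d(x,z)\le d(x,y)\oplus d(y,z)$. $d'$ on $\mathcal P(X)$ is join-preserving in its first argument if $d'(\bigcup_iX_i,Y)=\bigvee_id'(X_i,Y)$ for all families (empty join $=0$). For $f\colon X\to[0,1]$, $\tilde f(Y)=\bigvee_{x\in Y}f(x)$. $\alpha_T(\mathcal F)(X_1,X_2)=\bigvee_{f\in\mathcal F}(\tilde f(X_1)\ominus\tilde f(X_2))$ for $\mathcal F\subseteq[0,1]^X$; $\gamma_T(d)=\{f\in[0,1]^X\mid\forall X_1,X_2\subseteq X\colon\tilde f(X_1)\ominus\tilde f(X_2)\le d(X_1,X_2)\}$. *)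

theory Defs
  imports Main "HOL.Real"
begin

definition tplus :: "real \<Rightarrow> real \<Rightarrow> real" where
  "tplus r s = min (r + s) 1"

definition tminus :: "real \<Rightarrow> real \<Rightarrow> real" where
  "tminus r s = max 0 (r - s)"

definition join01 :: "real set \<Rightarrow> real" where
  "join01 A = (if A = {} then 0 else Sup A)"

definition directed_pseudo_metric :: "('y \<Rightarrow> 'y \<Rightarrow> real) \<Rightarrow> bool" where
  "directed_pseudo_metric d \<longleftrightarrow>
     (\<forall>x y. 0 \<le> d x y \<and> d x y \<le> 1) \<and>
     (\<forall>y. d y y = 0) \<and>
     (\<forall>x y z. d x z \<le> tplus (d x y) (d y z))"

definition join_preserving_fst :: "('a set \<Rightarrow> 'a set \<Rightarrow> real) \<Rightarrow> bool" where
  "join_preserving_fst d \<longleftrightarrow>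
     (\<forall>(S :: 'a set set) Y. d (\<Union>S) Y = join01 ((\<lambda>Xi. d Xi Y) ` S))"

definition lift_sup :: "('a \<Rightarrow> real) \<Rightarrow> 'a set \<Rightarrow> real" where
  "lift_sup f Y = join01 (f ` Y)"

definition alphaT :: "('a \<Rightarrow> real) set \<Rightarrow> 'a set \<Rightarrow> 'a set \<Rightarrow> real" where
  "alphaT F X1 X2 = join01 ((\<lambda>f. tminus (lift_sup f X1) (lift_sup f X2)) ` F)"

definition gammaT :: "('a set \<Rightarrow> 'a set \<Rightarrow> real) \<Rightarrow> ('a \<Rightarrow> real) set" where
  "gammaT d = {f. (\<forall>x. 0 \<le> f x \<and> f x \<le> 1) \<and>
      (\<forall>X1 X2. tminus (lift_sup f X1) (lift_sup f X2) \<le> d X1 X2)}"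

end

theory Submission
  imports Defs
begin

definition unitset :: "real set \<Rightarrow> bool" where
  "unitset A \<longleftrightarrow> (\<forall>a\<in>A. 0 \<le> a \<and> a \<le> 1)"

lemma j_le_iff:
  assumes "unitset A" "0 \<le> c"
  shows "join01 A \<le> c \<longleftrightarrow> (\<forall>a\<in>A. a \<le> c)"
proof (cases "A = {}")
  case True then show ?thesis using assms by (simp add: join01_def)
next
  case False
  have "bdd_above A" using assms(1) unfolding unitset_def bdd_above_def by blast
  then show ?thesis using False by (simp add: join01_def cSup_le_iff)
qed

lemma j_ge:
  assumes "unitset A" "a \<in> A"
  shows "a \<le> join01 A"
proof -
  have "bdd_above A" using assms(1) unfolding unitset_def bdd_above_def by blast
  then show ?thesis using assms by (auto simp add: join01_def intro: cSup_upper)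
qed

lemma j_bounds:
  assumes "unitset A"
  shows "0 \<le> join01 A \<and> join01 A \<le> 1"
proof (cases "A = {}")
  case True then show ?thesis by (simp add: join01_def)
next
  case False
  then obtain a where a: "a \<in> A" by blast
  have "a \<le> join01 A" using j_ge[OF assms a] .
  moreover have "0 \<le> a" using assms a unfolding unitset_def by auto
  moreover have "join01 A \<le> 1" using j_le_iff[OF assms, of 1] assms unfolding unitset_def by auto
  ultimately show ?thesis by auto
qed

lemma unitset_image: "(\<And>x. x \<in> S \<Longrightarrow> 0 \<le> g x \<and> g x \<le> 1) \<Longrightarrow> unitset (g ` S)"
  unfolding unitset_def by auto

lemma lift_bounds:
  assumes "\<forall>x. 0 \<le> f x \<and> f x \<le> 1"
  shows "0 \<le> lift_sup f Y \<and> lift_sup f Y \<le> 1"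
  unfolding lift_sup_def using assms by (intro j_bounds unitset_image) auto

lemma tminus_bounds:
  "0 \<le> a \<Longrightarrow> a \<le> 1 \<Longrightarrow> 0 \<le> b \<Longrightarrow> 0 \<le> tminus a b \<and> tminus a b \<le> 1"
  unfolding tminus_def by auto

lemma tl_bounds:
  assumes "\<forall>x. 0 \<le> f x \<and> f x \<le> 1"
  shows "0 \<le> tminus (lift_sup f X) (lift_sup f Y) \<and> tminus (lift_sup f X) (lift_sup f Y) \<le> 1"
  using lift_bounds[OF assms, of X] lift_bounds[OF assms, of Y] unfolding tminus_def by auto

lemma alpha_bounds:
  assumes "\<forall>f\<in>F. \<forall>x. 0 \<le> f x \<and> f x \<le> 1"
  shows "0 \<le> alphaT F X Y \<and> alphaT F X Y \<le> 1"
  unfolding alphaT_def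
proof (intro j_bounds unitset_image)
  fix f assume "f \<in> F"
  then have "\<forall>x. 0 \<le> f x \<and> f x \<le> 1" using assms by auto
  then show "0 \<le> tminus (lift_sup f X) (lift_sup f Y) \<and> tminus (lift_sup f X) (lift_sup f Y) \<le> 1" by (rule tl_bounds)
qed

lemma alpha_unit:
  assumes "\<forall>f\<in>F. \<forall>x. 0 \<le> f x \<and> f x \<le> 1"
  shows "unitset ((\<lambda>f. tminus (lift_sup f X1) (lift_sup f X2)) ` F)"
proof (intro unitset_image)
  fix f assume "f \<in> F"
  then have "\<forall>x. 0 \<le> f x \<and> f x \<le> 1" using assms by auto
  then show "0 \<le> tminus (lift_sup f X1) (lift_sup f X2) \<and> tminus (lift_sup f X1) (lift_sup f X2) \<le> 1" by (rule tl_bounds)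
qed

lemma lift_union:
  assumes "\<forall>x. 0 \<le> f x \<and> f x \<le> 1"
  shows "lift_sup f (\<Union>S) = join01 ((\<lambda>X. lift_sup f X) ` S)"
proof -
  have U1: "unitset (f ` Z)" for Z using assms by (intro unitset_image) auto
  have U2: "unitset ((\<lambda>X. lift_sup f X) ` S)" using lift_bounds[OF assms] by (intro unitset_image) auto
  have R0: "0 \<le> join01 ((\<lambda>X. lift_sup f X) ` S)" using j_bounds[OF U2] by auto
  have L0: "0 \<le> lift_sup f (\<Union>S)" using lift_bounds[OF assms] by auto
  have "lift_sup f (\<Union>S) \<le> join01 ((\<lambda>X. lift_sup f X) ` S)"
    unfolding lift_sup_def[of f "\<Union>S"]
  proof (subst j_le_iff[OF U1 R0], intro ballI)
    fix a assume "a \<in> f ` \<Union>S"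
    then obtain x X where x: "x \<in> X" "X \<in> S" "a = f x" by auto
    have "f x \<le> lift_sup f X" unfolding lift_sup_def using x by (intro j_ge[OF U1]) auto
    also have "\<dots> \<le> join01 ((\<lambda>X. lift_sup f X) ` S)" using x by (intro j_ge[OF U2]) auto
    finally show "a \<le> join01 ((\<lambda>X. lift_sup f X) ` S)" using x by simp
  qed
  moreover have "join01 ((\<lambda>X. lift_sup f X) ` S) \<le> lift_sup f (\<Union>S)"
  proof (subst j_le_iff[OF U2 L0], intro ballI)
    fix a assume "a \<in> (\<lambda>X. lift_sup f X) ` S"
    then obtain X where X: "X \<in> S" "a = lift_sup f X" by auto
    have "lift_sup f X \<le> lift_sup f (\<Union>S)"
      unfolding lift_sup_def[of f X]
      using X by (subst j_le_iff[OF U1 L0]) (auto simp: lift_sup_def intro!: j_ge[OF U1])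
    then show "a \<le> lift_sup f (\<Union>S)" using X by simp
  qed
  ultimately show ?thesis by linarith
qed

lemma alpha_join:
  assumes F: "\<forall>f\<in>F. \<forall>x. 0 \<le> f x \<and> f x \<le> 1"
  shows "alphaT F (\<Union>S) Y = join01 ((\<lambda>X. alphaT F X Y) ` S)"
proof -
  let ?R = "join01 ((\<lambda>X. alphaT F X Y) ` S)"
  have U2: "unitset ((\<lambda>X. alphaT F X Y) ` S)" using alpha_bounds[OF F] by (intro unitset_image) auto
  have R0: "0 \<le> ?R" using j_bounds[OF U2] by auto
  have L0: "0 \<le> alphaT F (\<Union>S) Y" using alpha_bounds[OF F] by auto
  have "alphaT F (\<Union>S) Y \<le> ?R"
    unfolding alphaT_def[of F "\<Union>S"]
  proof (subst j_le_iff[OF alpha_unit[OF F] R0], intro ballI)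
    fix a assume "a \<in> (\<lambda>f. tminus (lift_sup f (\<Union>S)) (lift_sup f Y)) ` F"
    then obtain f where f: "f \<in> F" "a = tminus (lift_sup f (\<Union>S)) (lift_sup f Y)" by auto
    have fb: "\<forall>x. 0 \<le> f x \<and> f x \<le> 1" using F f by auto
    have U3: "unitset ((\<lambda>X. lift_sup f X) ` S)" using lift_bounds[OF fb] by (intro unitset_image) auto
    have c0: "0 \<le> ?R + lift_sup f Y" using R0 lift_bounds[OF fb] by auto
    have "lift_sup f (\<Union>S) \<le> ?R + lift_sup f Y"
      unfolding lift_union[OF fb]
    proof (subst j_le_iff[OF U3 c0], intro ballI)
      fix b assume "b \<in> (\<lambda>X. lift_sup f X) ` S"
      then obtain X where X: "X \<in> S" "b = lift_sup f X" by auto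
      have "lift_sup f X - lift_sup f Y \<le> tminus (lift_sup f X) (lift_sup f Y)"
        unfolding tminus_def by auto
      also have "\<dots> \<le> alphaT F X Y" unfolding alphaT_def
        using f by (intro j_ge[OF alpha_unit[OF F]]) auto
      also have "\<dots> \<le> ?R" using X by (intro j_ge[OF U2]) auto
      finally show "b \<le> ?R + lift_sup f Y" using X by simp
    qed
    then show "a \<le> ?R" using f R0 unfolding tminus_def by auto
  qed
  moreover have "?R \<le> alphaT F (\<Union>S) Y"
  proof (subst j_le_iff[OF U2 L0], intro ballI)
    fix a assume "a \<in> (\<lambda>X. alphaT F X Y) ` S"
    then obtain X where X: "X \<in> S" "a = alphaT F X Y" by auto
    have "alphaT F X Y \<le> alphaT F (\<Union>S) Y"
      unfolding alphaT_def[of F X]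
    proof (subst j_le_iff[OF alpha_unit[OF F] L0], intro ballI)
      fix b assume "b \<in> (\<lambda>f. tminus (lift_sup f X) (lift_sup f Y)) ` F"
      then obtain f where f: "f \<in> F" "b = tminus (lift_sup f X) (lift_sup f Y)" by auto
      have fb: "\<forall>x. 0 \<le> f x \<and> f x \<le> 1" using F f by auto
      have U3: "unitset ((\<lambda>X. lift_sup f X) ` S)" using lift_bounds[OF fb] by (intro unitset_image) auto
      have "lift_sup f X \<le> lift_sup f (\<Union>S)" unfolding lift_union[OF fb]
        using X by (intro j_ge[OF U3]) auto
      then have "b \<le> tminus (lift_sup f (\<Union>S)) (lift_sup f Y)" using f unfolding tminus_def by auto
      also have "\<dots> \<le> alphaT F (\<Union>S) Y" unfolding alphaT_def
        using f by (intro j_ge[OF alpha_unit[OF F]]) auto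
      finally show "b \<le> alphaT F (\<Union>S) Y" .
    qed
    then show "a \<le> alphaT F (\<Union>S) Y" using X by simp
  qed
  ultimately show ?thesis by linarith
qed

lemma alpha_dpm:
  assumes F: "\<forall>f\<in>F. \<forall>x. 0 \<le> f x \<and> f x \<le> 1"
  shows "directed_pseudo_metric (alphaT F)"
  unfolding directed_pseudo_metric_def
proof (intro conjI allI)
  fix x y show "0 \<le> alphaT F x y" "alphaT F x y \<le> 1" using alpha_bounds[OF F] by auto
next
  fix y
  have "alphaT F y y \<le> 0" unfolding alphaT_def
    by (subst j_le_iff[OF alpha_unit[OF F]]) (auto simp: tminus_def)
  then show "alphaT F y y = 0" using alpha_bounds[OF F, of y y] by linarith
next
  fix x y z
  let ?a = "alphaT F x y" and ?b = "alphaT F y z"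
  have ab: "0 \<le> ?a" "0 \<le> ?b" "?a \<le> 1" "?b \<le> 1" using alpha_bounds[OF F] by auto
  have "alphaT F x z \<le> min (?a + ?b) 1"
    unfolding alphaT_def[of F x z]
  proof (subst j_le_iff[OF alpha_unit[OF F]], use ab in simp, intro ballI)
    fix c assume "c \<in> (\<lambda>f. tminus (lift_sup f x) (lift_sup f z)) ` F"
    then obtain f where f: "f \<in> F" "c = tminus (lift_sup f x) (lift_sup f z)" by auto
    have fb: "\<forall>x. 0 \<le> f x \<and> f x \<le> 1" using F f by auto
    have 1: "tminus (lift_sup f x) (lift_sup f y) \<le> ?a" unfolding alphaT_def
      using f by (intro j_ge[OF alpha_unit[OF F]]) auto
    have 2: "tminus (lift_sup f y) (lift_sup f z) \<le> ?b" unfolding alphaT_def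
      using f by (intro j_ge[OF alpha_unit[OF F]]) auto
    show "c \<le> min (?a + ?b) 1" using 1 2 f lift_bounds[OF fb, of x] lift_bounds[OF fb, of z] ab
      unfolding tminus_def by auto
  qed
  then show "alphaT F x z \<le> tplus ?a ?b" unfolding tplus_def .
qed

theorem mainTheorem16:
  fixes d :: "'a set \<Rightarrow> 'a set \<Rightarrow> real"
  assumes "directed_pseudo_metric d"
  shows "directed_pseudo_metric (alphaT (gammaT d))
    \<and> (\<forall>X1 X2. alphaT (gammaT d) X1 X2 \<le> d X1 X2)
    \<and> join_preserving_fst (alphaT (gammaT d))
    \<and> (\<forall>d'. directed_pseudo_metric d' \<and> (\<forall>X1 X2. d' X1 X2 \<le> d X1 X2)
            \<and> join_preserving_fst d'
          \<longrightarrow> (\<forall>X1 X2. d' X1 X2 \<le> alphaT (gammaT d) X1 X2))"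
proof (intro conjI allI impI)
  have F: "\<forall>f\<in>gammaT d. \<forall>x. 0 \<le> f x \<and> f x \<le> 1" unfolding gammaT_def by auto
  show "directed_pseudo_metric (alphaT (gammaT d))" using alpha_dpm[OF F] .
  show "join_preserving_fst (alphaT (gammaT d))" unfolding join_preserving_fst_def
    using alpha_join[OF F] by blast
  fix X1 X2
  have d0: "0 \<le> d X1 X2" using assms unfolding directed_pseudo_metric_def by auto
  show "alphaT (gammaT d) X1 X2 \<le> d X1 X2"
    unfolding alphaT_def
    by (subst j_le_iff[OF alpha_unit[OF F] d0]) (auto simp: gammaT_def)
next
  fix d' X1 X2
  assume H: "directed_pseudo_metric d' \<and> (\<forall>X1 X2. d' X1 X2 \<le> d X1 X2) \<and> join_preserving_fst d'"
  have F: "\<forall>f\<in>gammaT d. \<forall>x. 0 \<le> f x \<and> f x \<le> 1" unfolding gammaT_def by auto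
  define f where "f = (\<lambda>x. d' {x} X2)"
  have lf: "lift_sup f Z = d' Z X2" for Z
  proof -
    have "d' (\<Union>((\<lambda>x. {x}) ` Z)) X2 = join01 ((\<lambda>Xi. d' Xi X2) ` (\<lambda>x. {x}) ` Z)"
      using H unfolding join_preserving_fst_def by blast
    then show ?thesis unfolding lift_sup_def f_def by (simp add: image_image)
  qed
  have dp: "\<forall>x y. 0 \<le> d' x y \<and> d' x y \<le> 1" "\<forall>y. d' y y = 0"
    "\<forall>x y z. d' x z \<le> tplus (d' x y) (d' y z)"
    using H unfolding directed_pseudo_metric_def by auto
  have fg: "f \<in> gammaT d" unfolding gammaT_def
  proof (intro CollectI conjI allI)
    fix x show "0 \<le> f x" "f x \<le> 1" unfolding f_def using dp by auto
  next
    fix Z1 Z2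
    have "d' Z1 X2 \<le> d' Z1 Z2 + d' Z2 X2" proof -
      have "d' Z1 X2 \<le> tplus (d' Z1 Z2) (d' Z2 X2)" using dp(3) by blast
      then show ?thesis unfolding tplus_def by auto
    qed
    then show "tminus (lift_sup f Z1) (lift_sup f Z2) \<le> d Z1 Z2"
      unfolding lf tminus_def using H dp(1) by (smt (verit))
  qed
  have "d' X1 X2 = tminus (lift_sup f X1) (lift_sup f X2)"
    unfolding lf tminus_def using dp by auto
  also have "\<dots> \<le> alphaT (gammaT d) X1 X2" unfolding alphaT_def
    using fg by (intro j_ge[OF alpha_unit[OF F]]) auto
  finally show "d' X1 X2 \<le> alphaT (gammaT d) X1 X2" .
qed

end
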